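(* Let $s(x)\in\Omega$ be a generalized power series with \[ \dim_{\mathbb{Q}}\frac{\langle\operatorname{supp}s(x)\cup\mathbb{Q}\rangle}{\mathbb{Q}}>n . \] Then $s(x)$ is not a solution of any nontrivial equation $P=0$ of order $n$ over the fraction field of the ring of Puiseux series, i.e. there is no non-zero $P\in K[y_0,\ldots,y_n]$ with $P(s(x),s'(x),\ldots,s^{(n)}(x))=0$, where $K=\bigcup_{d\ge1}\mathbb{C}((x^{1/d}))$.
   Context: $\Omega$ denotes the field of generalized power series $s(x)=\sum_{i\ge1}c_i x^{\mu_i}$ with $c_i\in\mathbb{C}$, $\mu_i\in\mathbb{R}$, $\mu_1<\mu_2<\cdots$ and $\mu_i\to\infty$ when there are infinitely many terms; $\operatorname{supp}s=\{\mu_i:c_i\ne0\}$. For $E\subset\mathbb{R}$, $\langle E\rangle$ is the $\mathbb{Q}$-linear span of $E$ in $\mathbb{R}$. The operator $'$ is one fixed choice among: (a) ordinary derivative $\frac{d}{dx}$; (b) Euler derivative $x\frac{d}{dx}$; (c) $q$-difference operator $s'(x)=s(qx)$, i.e. $\sum c_ix^{\mu_i}\mapsto\sum c_iq^{\mu_i}x^{\mu_i}$, for fixed $q\in\mathbb{C}$, $|q|\ne1$. $s^{(\kappa)}$ is the $\kappa$-th iterate of $'$. *)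

theory Defs
  imports "HOL-Analysis.Analysis"
begin

text \<open>A generalized power series sum c_i x^mu_i is represented by its coefficient
  function real => complex. Membership in Omega: the support meets every
  half-line (-inf, M] in a finite set (equivalently: the exponents can be listed
  as mu_1 < mu_2 < ... with mu_i -> infinity, or the support is finite).\<close>

type_synonym gser = "real \<Rightarrow> complex"

definition gsupp :: "gser \<Rightarrow> real set" where
  "gsupp s = {\<mu>. s \<mu> \<noteq> 0}"

definition Omega :: "gser set" where
  "Omega = {s. \<forall>M. finite {\<mu>. s \<mu> \<noteq> 0 \<and> \<mu> \<le> M}}"

definition gs_zero :: gser where "gs_zero = (\<lambda>_. 0)"

definition gs_one :: gser where "gs_one = (\<lambda>\<mu>. if \<mu> = 0 then 1 else 0)"

definition gs_mult :: "gser \<Rightarrow> gser \<Rightarrow> gser" where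
  "gs_mult a b = (\<lambda>\<mu>. \<Sum>\<nu>\<in>{\<nu>. a \<nu> \<noteq> 0 \<and> b (\<mu> - \<nu>) \<noteq> 0}. a \<nu> * b (\<mu> - \<nu>))"

definition gs_pow :: "gser \<Rightarrow> nat \<Rightarrow> gser" where
  "gs_pow a k = (gs_mult a ^^ k) gs_one"

text \<open>The field K of Puiseux (Laurent) series: union over d >= 1 of C((x^(1/d))),
  i.e. elements of Omega whose support lies in (1/d) Z for some d >= 1.\<close>

definition Puiseux :: "gser set" where
  "Puiseux = {s \<in> Omega. \<exists>d::nat. d \<ge> 1 \<and> (\<forall>\<mu>\<in>gsupp s. \<exists>k::int. \<mu> = real_of_int k / real d)}"

datatype gop = Deriv | Euler | QDiff complex

definition admissible_op :: "gop \<Rightarrow> bool" where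
  "admissible_op D = (case D of QDiff q \<Rightarrow> q \<noteq> 0 \<and> cmod q \<noteq> 1 | _ \<Rightarrow> True)"

text \<open>d/dx x^mu = mu x^(mu-1); x d/dx x^mu = mu x^mu; x^mu -> q^mu x^mu with
  q^mu = exp(mu Ln q) (principal branch).\<close>

fun gs_op :: "gop \<Rightarrow> gser \<Rightarrow> gser" where
  "gs_op Deriv s = (\<lambda>\<mu>. complex_of_real (\<mu> + 1) * s (\<mu> + 1))"
| "gs_op Euler s = (\<lambda>\<mu>. complex_of_real \<mu> * s \<mu>)"
| "gs_op (QDiff q) s = (\<lambda>\<mu>. exp (complex_of_real \<mu> * Ln q) * s \<mu>)"

text \<open>Differential (difference) polynomial P in y_0..y_n with coefficients in K,
  given as a finitely supported map from exponent vectors alpha (alpha i = 0 for i > n)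
  to coefficients.\<close>

definition diff_poly :: "nat \<Rightarrow> ((nat \<Rightarrow> nat) \<Rightarrow> gser) \<Rightarrow> bool" where
  "diff_poly n P \<longleftrightarrow> finite {\<alpha>. P \<alpha> \<noteq> gs_zero}
     \<and> (\<forall>\<alpha>. P \<alpha> \<noteq> gs_zero \<longrightarrow> (\<forall>i>n. \<alpha> i = 0))
     \<and> (\<forall>\<alpha>. P \<alpha> \<in> Puiseux)"

definition eval_diff_poly :: "gop \<Rightarrow> nat \<Rightarrow> ((nat \<Rightarrow> nat) \<Rightarrow> gser) \<Rightarrow> gser \<Rightarrow> gser" where
  "eval_diff_poly D n P s = (\<lambda>\<mu>. \<Sum>\<alpha>\<in>{\<alpha>. P \<alpha> \<noteq> gs_zero}.
      (foldr (\<lambda>i acc. gs_mult (gs_pow ((gs_op D ^^ i) s) (\<alpha> i)) acc) [0..<Suc n] (P \<alpha>)) \<mu>)"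

definition rat_span :: "real set \<Rightarrow> real set" where
  "rat_span E = {x. \<exists>F r. finite F \<and> F \<subseteq> E \<and> x = (\<Sum>e\<in>F. real_of_rat (r e) * e)}"

definition indep_mod_Q :: "nat \<Rightarrow> (nat \<Rightarrow> real) \<Rightarrow> bool" where
  "indep_mod_Q m v \<longleftrightarrow> (\<forall>r::nat \<Rightarrow> rat. (\<Sum>i<m. real_of_rat (r i) * v i) \<in> \<rat> \<longrightarrow> (\<forall>i<m. r i = 0))"

definition dim_mod_Q_gt :: "real set \<Rightarrow> nat \<Rightarrow> bool" where
  "dim_mod_Q_gt E m \<longleftrightarrow> (\<exists>v. (\<forall>i<Suc m. v i \<in> rat_span (E \<union> \<rat>)) \<and> indep_mod_Q (Suc m) v)"

end

theory Submission
  imports Defs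
begin

lemma omega_below_finite: "s \<in> Omega \<Longrightarrow> finite {\<mu>. s \<mu> \<noteq> 0 \<and> \<mu> \<le> M}"
  unfolding Omega_def by blast

lemma omega_min:
  assumes "s \<in> Omega" "s \<mu>1 \<noteq> 0"
  shows "\<exists>m. s m \<noteq> 0 \<and> (\<forall>\<mu>. s \<mu> \<noteq> 0 \<longrightarrow> m \<le> \<mu>)"
proof -
  define F where "F = {\<mu>. s \<mu> \<noteq> 0 \<and> \<mu> \<le> \<mu>1}"
  have fin: "finite F" unfolding F_def using omega_below_finite[OF assms(1)] .
  have ne: "\<mu>1 \<in> F" using assms(2) by (simp add: F_def)
  have "Min F \<in> F" using fin ne Min_in by blast
  moreover have "\<forall>\<mu>. s \<mu> \<noteq> 0 \<longrightarrow> Min F \<le> \<mu>"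
  proof (intro allI impI)
    fix \<mu> assume "s \<mu> \<noteq> 0"
    show "Min F \<le> \<mu>"
    proof (cases "\<mu> \<le> \<mu>1")
      case True thus ?thesis using fin \<open>s \<mu> \<noteq> 0\<close> by (simp add: F_def)
    next
      case False thus ?thesis using Min_le[OF fin ne] by simp
    qed
  qed
  ultimately show ?thesis unfolding F_def by blast
qed

lemma omega_lb: "s \<in> Omega \<Longrightarrow> \<exists>L. \<forall>\<mu>. s \<mu> \<noteq> 0 \<longrightarrow> L \<le> \<mu>"
proof (cases "\<exists>\<mu>1. s \<mu>1 \<noteq> 0")
  case True
  assume "s \<in> Omega"
  then obtain \<mu>1 where "s \<mu>1 \<noteq> 0" using True by blast
  from omega_min[OF \<open>s \<in> Omega\<close> this] show ?thesis by blast
qed auto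

lemma gs_mult_eq:
  assumes "finite T" "{\<nu>. a \<nu> \<noteq> 0 \<and> b (\<mu> - \<nu>) \<noteq> 0} \<subseteq> T"
  shows "gs_mult a b \<mu> = (\<Sum>\<nu>\<in>T. a \<nu> * b (\<mu> - \<nu>))"
  unfolding gs_mult_def by (rule sum.mono_neutral_left) (use assms in auto)

lemma gs_mult_nz: assumes "gs_mult a b \<mu> \<noteq> 0" shows "\<exists>\<nu>. a \<nu> \<noteq> 0 \<and> b (\<mu> - \<nu>) \<noteq> 0"
proof (rule ccontr)
  assume "\<not> (\<exists>\<nu>. a \<nu> \<noteq> 0 \<and> b (\<mu> - \<nu>) \<noteq> 0)"
  hence e: "{\<nu>. a \<nu> \<noteq> 0 \<and> b (\<mu> - \<nu>) \<noteq> 0} = {}" by auto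
  show False using assms unfolding gs_mult_def e by simp
qed

lemma gs_mult_lb:
  assumes "\<forall>\<mu>. a \<mu> \<noteq> 0 \<longrightarrow> La \<le> \<mu>" "\<forall>\<mu>. b \<mu> \<noteq> 0 \<longrightarrow> Lb \<le> \<mu>" "gs_mult a b \<mu> \<noteq> 0"
  shows "La + Lb \<le> \<mu>"
proof -
  obtain \<nu> where "a \<nu> \<noteq> 0" "b (\<mu> - \<nu>) \<noteq> 0" using gs_mult_nz[OF assms(3)] by blast
  hence "La \<le> \<nu>" "Lb \<le> \<mu> - \<nu>" using assms(1,2) by auto
  thus ?thesis by simp
qed

lemma gs_mult_Omega:
  assumes a: "a \<in> Omega" and b: "b \<in> Omega"
  shows "gs_mult a b \<in> Omega"
proof -
  obtain La where La: "\<forall>\<mu>. a \<mu> \<noteq> 0 \<longrightarrow> La \<le> \<mu>" using omega_lb[OF a] by blast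
  obtain Lb where Lb: "\<forall>\<mu>. b \<mu> \<noteq> 0 \<longrightarrow> Lb \<le> \<mu>" using omega_lb[OF b] by blast
  show ?thesis unfolding Omega_def
  proof (intro CollectI allI)
    fix M
    have "{\<mu>. gs_mult a b \<mu> \<noteq> 0 \<and> \<mu> \<le> M} \<subseteq>
      (\<lambda>(x,y). x + y) ` ({x. a x \<noteq> 0 \<and> x \<le> M - Lb} \<times> {y. b y \<noteq> 0 \<and> y \<le> M - La})"
    proof
      fix \<mu> assume "\<mu> \<in> {\<mu>. gs_mult a b \<mu> \<noteq> 0 \<and> \<mu> \<le> M}"
      hence h: "gs_mult a b \<mu> \<noteq> 0" "\<mu> \<le> M" by auto
      obtain \<nu> where nu: "a \<nu> \<noteq> 0" "b (\<mu> - \<nu>) \<noteq> 0" using gs_mult_nz[OF h(1)] by blast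
      have "La \<le> \<nu>" "Lb \<le> \<mu> - \<nu>" using nu La Lb by auto
      hence "(\<nu>, \<mu> - \<nu>) \<in> {x. a x \<noteq> 0 \<and> x \<le> M - Lb} \<times> {y. b y \<noteq> 0 \<and> y \<le> M - La}"
        using nu h(2) by auto
      thus "\<mu> \<in> (\<lambda>(x,y). x + y) ` ({x. a x \<noteq> 0 \<and> x \<le> M - Lb} \<times> {y. b y \<noteq> 0 \<and> y \<le> M - La})"
        by (rule image_eqI[rotated]) simp
    qed
    moreover have "finite ((\<lambda>(x,y). x + y) ` ({x. a x \<noteq> 0 \<and> x \<le> M - Lb} \<times> {y. b y \<noteq> 0 \<and> y \<le> M - La}))"
      using omega_below_finite[OF a] omega_below_finite[OF b] by auto
    ultimately show "finite {\<mu>. gs_mult a b \<mu> \<noteq> 0 \<and> \<mu> \<le> M}" by (rule finite_subset)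
  qed
qed

lemma gs_mult_comm: "gs_mult a b = gs_mult b a"
proof
  fix \<mu>
  show "gs_mult a b \<mu> = gs_mult b a \<mu>"
    unfolding gs_mult_def
    by (rule sum.reindex_bij_witness[of _ "\<lambda>\<nu>. \<mu> - \<nu>" "\<lambda>\<nu>. \<mu> - \<nu>"]) auto
qed

lemma gs_mult_one: "gs_mult gs_one a = a"
proof
  fix \<mu>
  have "gs_mult gs_one a \<mu> = (\<Sum>\<nu>\<in>{0}. gs_one \<nu> * a (\<mu> - \<nu>))"
    by (rule gs_mult_eq) (auto simp: gs_one_def split: if_splits)
  thus "gs_mult gs_one a \<mu> = a \<mu>" by (simp add: gs_one_def)
qed

lemma gs_mult_zero: "gs_mult gs_zero a = gs_zero"
  unfolding gs_mult_def gs_zero_def by auto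

lemma gs_mult_distrib:
  assumes a: "a \<in> Omega" and b: "b \<in> Omega" and c: "c \<in> Omega"
  shows "gs_mult (\<lambda>\<mu>. b \<mu> + c \<mu>) a = (\<lambda>\<mu>. gs_mult b a \<mu> + gs_mult c a \<mu>)"
proof
  fix \<mu>
  obtain La where La: "\<forall>\<mu>. a \<mu> \<noteq> 0 \<longrightarrow> La \<le> \<mu>" using omega_lb[OF a] by blast
  define T where "T = {\<nu>. b \<nu> \<noteq> 0 \<and> \<nu> \<le> \<mu> - La} \<union> {\<nu>. c \<nu> \<noteq> 0 \<and> \<nu> \<le> \<mu> - La}"
  have fT: "finite T" unfolding T_def using omega_below_finite[OF b] omega_below_finite[OF c] by auto
  have "gs_mult (\<lambda>\<mu>. b \<mu> + c \<mu>) a \<mu> = (\<Sum>\<nu>\<in>T. (b \<nu> + c \<nu>) * a (\<mu> - \<nu>))"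
  proof (rule gs_mult_eq[OF fT])
    show "{\<nu>. b \<nu> + c \<nu> \<noteq> 0 \<and> a (\<mu> - \<nu>) \<noteq> 0} \<subseteq> T"
    proof
      fix \<nu> assume h: "\<nu> \<in> {\<nu>. b \<nu> + c \<nu> \<noteq> 0 \<and> a (\<mu> - \<nu>) \<noteq> 0}"
      hence "La \<le> \<mu> - \<nu>" using La by auto
      thus "\<nu> \<in> T" using h unfolding T_def by (cases "b \<nu> = 0") auto
    qed
  qed
  moreover have "gs_mult b a \<mu> = (\<Sum>\<nu>\<in>T. b \<nu> * a (\<mu> - \<nu>))"
  proof (rule gs_mult_eq[OF fT])
    show "{\<nu>. b \<nu> \<noteq> 0 \<and> a (\<mu> - \<nu>) \<noteq> 0} \<subseteq> T"
      using La unfolding T_def by force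
  qed
  moreover have "gs_mult c a \<mu> = (\<Sum>\<nu>\<in>T. c \<nu> * a (\<mu> - \<nu>))"
  proof (rule gs_mult_eq[OF fT])
    show "{\<nu>. c \<nu> \<noteq> 0 \<and> a (\<mu> - \<nu>) \<noteq> 0} \<subseteq> T"
      using La unfolding T_def by force
  qed
  ultimately show "gs_mult (\<lambda>\<mu>. b \<mu> + c \<mu>) a \<mu> = gs_mult b a \<mu> + gs_mult c a \<mu>"
    by (simp add: sum.distrib distrib_right)
qed

lemma gs_mult_assoc:
  assumes a: "a \<in> Omega" and b: "b \<in> Omega" and c: "c \<in> Omega"
  shows "gs_mult (gs_mult a b) c = gs_mult a (gs_mult b c)"
proof
  fix \<mu>
  obtain La where La: "\<forall>\<mu>. a \<mu> \<noteq> 0 \<longrightarrow> La \<le> \<mu>" using omega_lb[OF a] by blast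
  obtain Lb where Lb: "\<forall>\<mu>. b \<mu> \<noteq> 0 \<longrightarrow> Lb \<le> \<mu>" using omega_lb[OF b] by blast
  obtain Lc where Lc: "\<forall>\<mu>. c \<mu> \<noteq> 0 \<longrightarrow> Lc \<le> \<mu>" using omega_lb[OF c] by blast
  define A where "A = {x. a x \<noteq> 0 \<and> x \<le> \<mu> - Lb - Lc}"
  define B where "B = {y. b y \<noteq> 0 \<and> y \<le> \<mu> - La - Lc}"
  define N where "N = (\<lambda>(x,y). x + y) ` (A \<times> B)"
  have fA: "finite A" unfolding A_def using omega_below_finite[OF a] .
  have fB: "finite B" unfolding B_def using omega_below_finite[OF b] .
  have fN: "finite N" unfolding N_def using fA fB by simp
  have inN: "x + y \<in> N" if "x \<in> A" "y \<in> B" for x y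
    unfolding N_def using that by force
  have "gs_mult (gs_mult a b) c \<mu> = (\<Sum>\<nu>\<in>N. gs_mult a b \<nu> * c (\<mu> - \<nu>))"
  proof (rule gs_mult_eq[OF fN], rule subsetI)
    fix \<nu> assume "\<nu> \<in> {\<nu>. gs_mult a b \<nu> \<noteq> 0 \<and> c (\<mu> - \<nu>) \<noteq> 0}"
    hence h: "gs_mult a b \<nu> \<noteq> 0" "c (\<mu> - \<nu>) \<noteq> 0" by auto
    obtain x where x: "a x \<noteq> 0" "b (\<nu> - x) \<noteq> 0" using gs_mult_nz[OF h(1)] by blast
    have "Lc \<le> \<mu> - \<nu>" "La \<le> x" "Lb \<le> \<nu> - x" using h x La Lb Lc by auto
    hence "x \<in> A" "\<nu> - x \<in> B" using x unfolding A_def B_def by auto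
    from inN[OF this] show "\<nu> \<in> N" by simp
  qed
  also have "\<dots> = (\<Sum>\<nu>\<in>N. (\<Sum>x\<in>A. a x * b (\<nu> - x)) * c (\<mu> - \<nu>))"
  proof (rule sum.cong[OF refl])
    fix \<nu> assume "\<nu> \<in> N"
    show "gs_mult a b \<nu> * c (\<mu> - \<nu>) = (\<Sum>x\<in>A. a x * b (\<nu> - x)) * c (\<mu> - \<nu>)"
    proof (cases "c (\<mu> - \<nu>) = 0")
      case False
      hence "Lc \<le> \<mu> - \<nu>" using Lc by auto
      have "gs_mult a b \<nu> = (\<Sum>x\<in>A. a x * b (\<nu> - x))"
      proof (rule gs_mult_eq[OF fA], rule subsetI)
        fix x assume "x \<in> {x. a x \<noteq> 0 \<and> b (\<nu> - x) \<noteq> 0}"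
        hence "a x \<noteq> 0" "Lb \<le> \<nu> - x" using Lb by auto
        thus "x \<in> A" using \<open>Lc \<le> \<mu> - \<nu>\<close> unfolding A_def by auto
      qed
      thus ?thesis by simp
    qed simp
  qed
  also have "\<dots> = (\<Sum>x\<in>A. a x * (\<Sum>\<nu>\<in>N. b (\<nu> - x) * c (\<mu> - \<nu>)))"
    by (simp add: sum_distrib_left sum_distrib_right sum.swap[of _ N A] mult.assoc)
  also have "\<dots> = (\<Sum>x\<in>A. a x * gs_mult b c (\<mu> - x))"
  proof (rule sum.cong[OF refl])
    fix x assume xA: "x \<in> A"
    hence "La \<le> x" using La unfolding A_def by auto
    have inj: "inj_on (\<lambda>\<nu>. \<nu> - x) N" by (rule inj_onI) simp
    have "gs_mult b c (\<mu> - x) = (\<Sum>y\<in>(\<lambda>\<nu>. \<nu> - x) ` N. b y * c (\<mu> - x - y))"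
    proof (rule gs_mult_eq, simp add: fN, rule subsetI)
      fix y assume "y \<in> {y. b y \<noteq> 0 \<and> c (\<mu> - x - y) \<noteq> 0}"
      hence "b y \<noteq> 0" "Lc \<le> \<mu> - x - y" using Lc by auto
      hence "y \<in> B" using \<open>La \<le> x\<close> unfolding B_def by auto
      from inN[OF xA this] have "x + y \<in> N" .
      thus "y \<in> (\<lambda>\<nu>. \<nu> - x) ` N" by (metis add_diff_cancel_left' image_eqI)
    qed
    also have "\<dots> = (\<Sum>\<nu>\<in>N. b (\<nu> - x) * c (\<mu> - \<nu>))"
      by (simp add: sum.reindex[OF inj])
    finally show "a x * (\<Sum>\<nu>\<in>N. b (\<nu> - x) * c (\<mu> - \<nu>)) = a x * gs_mult b c (\<mu> - x)" by simp
  qed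
  also have "\<dots> = gs_mult a (gs_mult b c) \<mu>"
  proof (rule sym, rule gs_mult_eq[OF fA], rule subsetI)
    fix x assume "x \<in> {x. a x \<noteq> 0 \<and> gs_mult b c (\<mu> - x) \<noteq> 0}"
    hence "a x \<noteq> 0" "Lb + Lc \<le> \<mu> - x" using gs_mult_lb[OF Lb Lc] by auto
    thus "x \<in> A" unfolding A_def by auto
  qed
  finally show "gs_mult (gs_mult a b) c \<mu> = gs_mult a (gs_mult b c) \<mu>" .
qed

typedef omega = Omega
  by (rule exI[of _ gs_zero]) (simp add: Omega_def gs_zero_def)

lemma Omega_zero: "gs_zero \<in> Omega" by (simp add: Omega_def gs_zero_def)
lemma Omega_one: "gs_one \<in> Omega"
proof -
  have "{\<mu>. gs_one \<mu> \<noteq> 0 \<and> \<mu> \<le> M} \<subseteq> {0}" for M by (auto simp: gs_one_def split: if_splits)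
  hence "finite {\<mu>. gs_one \<mu> \<noteq> 0 \<and> \<mu> \<le> M}" for M by (rule finite_subset) simp
  thus ?thesis unfolding Omega_def by simp
qed
lemma Omega_add: "a \<in> Omega \<Longrightarrow> b \<in> Omega \<Longrightarrow> (\<lambda>\<mu>. a \<mu> + b \<mu>) \<in> Omega"
proof -
  assume a: "a \<in> Omega" and b: "b \<in> Omega"
  have "{\<mu>. a \<mu> + b \<mu> \<noteq> 0 \<and> \<mu> \<le> M} \<subseteq> {\<mu>. a \<mu> \<noteq> 0 \<and> \<mu> \<le> M} \<union> {\<mu>. b \<mu> \<noteq> 0 \<and> \<mu> \<le> M}" for M
    by auto
  moreover have "finite ({\<mu>. a \<mu> \<noteq> 0 \<and> \<mu> \<le> M} \<union> {\<mu>. b \<mu> \<noteq> 0 \<and> \<mu> \<le> M})" for M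
    using omega_below_finite[OF a] omega_below_finite[OF b] by blast
  ultimately have "finite {\<mu>. a \<mu> + b \<mu> \<noteq> 0 \<and> \<mu> \<le> M}" for M by (rule finite_subset)
  thus ?thesis unfolding Omega_def by simp
qed
lemma Omega_subset: "a \<in> Omega \<Longrightarrow> (\<And>\<mu>. b \<mu> \<noteq> 0 \<Longrightarrow> a \<mu> \<noteq> 0) \<Longrightarrow> b \<in> Omega"
proof -
  assume a: "a \<in> Omega" and h: "\<And>\<mu>. b \<mu> \<noteq> 0 \<Longrightarrow> a \<mu> \<noteq> 0"
  have "{\<mu>. b \<mu> \<noteq> 0 \<and> \<mu> \<le> M} \<subseteq> {\<mu>. a \<mu> \<noteq> 0 \<and> \<mu> \<le> M}" for M using h by auto
  hence "finite {\<mu>. b \<mu> \<noteq> 0 \<and> \<mu> \<le> M}" for M using omega_below_finite[OF a] by (rule finite_subset)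
  thus ?thesis unfolding Omega_def by simp
qed
lemma Omega_scale: "a \<in> Omega \<Longrightarrow> (\<lambda>\<mu>. f \<mu> * a \<mu>) \<in> Omega"
  by (rule Omega_subset[of a]) auto
lemma Omega_uminus: "a \<in> Omega \<Longrightarrow> (\<lambda>\<mu>. - a \<mu>) \<in> Omega"
  by (rule Omega_subset[of a]) auto

instantiation omega :: comm_ring_1
begin
definition zero_omega_def: "0 = Abs_omega gs_zero"
definition one_omega_def: "1 = Abs_omega gs_one"
definition plus_omega_def: "a + b = Abs_omega (\<lambda>\<mu>. Rep_omega a \<mu> + Rep_omega b \<mu>)"
definition uminus_omega_def: "- a = Abs_omega (\<lambda>\<mu>. - Rep_omega a \<mu>)"
definition minus_omega_def: "a - b = Abs_omega (\<lambda>\<mu>. Rep_omega a \<mu> - Rep_omega b \<mu>)"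
definition times_omega_def: "a * b = Abs_omega (gs_mult (Rep_omega a) (Rep_omega b))"

lemma Rep_zero: "Rep_omega 0 = gs_zero"
  by (simp add: zero_omega_def Abs_omega_inverse Omega_zero)
lemma Rep_one: "Rep_omega 1 = gs_one"
  by (simp add: one_omega_def Abs_omega_inverse Omega_one)
lemma Rep_plus: "Rep_omega (a + b) = (\<lambda>\<mu>. Rep_omega a \<mu> + Rep_omega b \<mu>)"
  by (simp add: plus_omega_def Abs_omega_inverse Omega_add Rep_omega)
lemma Rep_uminus: "Rep_omega (- a) = (\<lambda>\<mu>. - Rep_omega a \<mu>)"
  by (simp add: uminus_omega_def Abs_omega_inverse Omega_uminus Rep_omega)
lemma Rep_minus: "Rep_omega (a - b) = (\<lambda>\<mu>. Rep_omega a \<mu> - Rep_omega b \<mu>)"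
proof -
  have "(\<lambda>\<mu>. Rep_omega a \<mu> - Rep_omega b \<mu>) \<in> Omega"
    using Omega_add[OF Rep_omega[of a] Omega_uminus[OF Rep_omega[of b]]] by simp
  thus ?thesis by (simp add: minus_omega_def Abs_omega_inverse)
qed
lemma Rep_times: "Rep_omega (a * b) = gs_mult (Rep_omega a) (Rep_omega b)"
  by (simp add: times_omega_def Abs_omega_inverse gs_mult_Omega Rep_omega)

instance
proof
  fix a b c :: omega
  show "a * b * c = a * (b * c)"
    by (simp add: Rep_omega_inject[symmetric] Rep_times gs_mult_assoc Rep_omega)
  show "a * b = b * a"
    by (simp add: Rep_omega_inject[symmetric] Rep_times gs_mult_comm)
  show "1 * a = a"
    by (simp add: Rep_omega_inject[symmetric] Rep_times Rep_one gs_mult_one)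
  show "(a + b) * c = a * c + b * c"
    by (simp add: Rep_omega_inject[symmetric] Rep_times Rep_plus gs_mult_distrib Rep_omega)
  show "a + b + c = a + (b + c)"
    by (simp add: Rep_omega_inject[symmetric] Rep_plus add.assoc)
  show "a + b = b + a"
    by (simp add: Rep_omega_inject[symmetric] Rep_plus add.commute)
  show "0 + a = a"
    by (simp add: Rep_omega_inject[symmetric] Rep_plus Rep_zero gs_zero_def)
  show "- a + a = 0"
    by (simp add: Rep_omega_inject[symmetric] Rep_plus Rep_zero Rep_uminus gs_zero_def)
  show "a - b = a + - b"
    by (simp add: Rep_omega_inject[symmetric] Rep_plus Rep_minus Rep_uminus)
  show "(0::omega) \<noteq> 1"
    by (simp add: Rep_omega_inject[symmetric] Rep_one Rep_zero gs_zero_def gs_one_def fun_eq_iff)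
qed
end

lemma Rep_eq_zero_iff: "a = 0 \<longleftrightarrow> Rep_omega a = gs_zero"
  by (simp add: Rep_omega_inject[symmetric] Rep_zero)

lemma Rep_sum: "finite A \<Longrightarrow> Rep_omega (\<Sum>x\<in>A. f x) = (\<lambda>\<mu>. \<Sum>x\<in>A. Rep_omega (f x) \<mu>)"
  by (induction A rule: finite_induct) (auto simp: Rep_zero Rep_plus gs_zero_def)

lemma Rep_of_nat: "Rep_omega (of_nat k) = (\<lambda>\<mu>. if \<mu> = 0 then of_nat k else 0)"
  by (induction k) (auto simp: Rep_zero Rep_plus Rep_one gs_zero_def gs_one_def)

lemma Rep_of_nat_times: "Rep_omega (of_nat k * a) = (\<lambda>\<mu>. of_nat k * Rep_omega a \<mu>)"
proof
  fix \<mu>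
  have "Rep_omega (of_nat k * a) \<mu> = (\<Sum>\<nu>\<in>{0}. Rep_omega (of_nat k) \<nu> * Rep_omega a (\<mu> - \<nu>))"
    unfolding Rep_times by (rule gs_mult_eq) (auto simp: Rep_of_nat split: if_splits)
  thus "Rep_omega (of_nat k * a) \<mu> = of_nat k * Rep_omega a \<mu>" by (simp add: Rep_of_nat)
qed

lemma gs_pow_Rep: "gs_pow (Rep_omega a) k = Rep_omega (a ^ k)"
proof (induction k)
  case 0 thus ?case by (simp add: gs_pow_def Rep_one)
next
  case (Suc k)
  have "gs_pow (Rep_omega a) (Suc k) = gs_mult (Rep_omega a) (gs_pow (Rep_omega a) k)"
    by (simp add: gs_pow_def)
  thus ?case using Suc by (simp add: Rep_times)
qed

lemma gs_op_Omega: "s \<in> Omega \<Longrightarrow> gs_op D s \<in> Omega"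
proof (cases D)
  case Deriv
  assume s: "s \<in> Omega"
  have "{\<mu>. gs_op D s \<mu> \<noteq> 0 \<and> \<mu> \<le> M} \<subseteq> (\<lambda>x. x - 1) ` {x. s x \<noteq> 0 \<and> x \<le> M + 1}" for M
  proof
    fix \<mu> assume "\<mu> \<in> {\<mu>. gs_op D s \<mu> \<noteq> 0 \<and> \<mu> \<le> M}"
    hence "s (\<mu> + 1) \<noteq> 0" "\<mu> + 1 \<le> M + 1" using Deriv by auto
    thus "\<mu> \<in> (\<lambda>x. x - 1) ` {x. s x \<noteq> 0 \<and> x \<le> M + 1}" by (intro image_eqI[of _ _ "\<mu> + 1"]) auto
  qed
  hence "finite {\<mu>. gs_op D s \<mu> \<noteq> 0 \<and> \<mu> \<le> M}" for M
    using omega_below_finite[OF s, of "M + 1"] by (meson finite_imageI finite_subset)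
  thus ?thesis unfolding Omega_def by simp
next
  case Euler
  assume s: "s \<in> Omega"
  show ?thesis using Euler by (simp add: Omega_scale[OF s])
next
  case (QDiff q)
  assume s: "s \<in> Omega"
  show ?thesis using QDiff by (simp add: Omega_scale[OF s])
qed

lemma gs_op_iter_Omega: "s \<in> Omega \<Longrightarrow> (gs_op D ^^ i) s \<in> Omega"
  by (induction i) (auto simp: gs_op_Omega)

lemma foldr_eq:
  assumes "\<And>i. y i \<in> Omega" "c \<in> Omega"
  shows "foldr (\<lambda>i acc. gs_mult (gs_pow (y i) (\<alpha> i)) acc) xs c
       = Rep_omega ((\<Prod>i\<leftarrow>xs. Abs_omega (y i) ^ \<alpha> i) * Abs_omega c)"
proof (induction xs)
  case Nil thus ?case using assms(2) by (simp add: Abs_omega_inverse)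
next
  case (Cons i xs)
  have yi: "y i = Rep_omega (Abs_omega (y i))" using assms(1) by (simp add: Abs_omega_inverse)
  have "foldr (\<lambda>i acc. gs_mult (gs_pow (y i) (\<alpha> i)) acc) (i # xs) c
      = gs_mult (gs_pow (y i) (\<alpha> i)) (Rep_omega ((\<Prod>i\<leftarrow>xs. Abs_omega (y i) ^ \<alpha> i) * Abs_omega c))"
    using Cons by simp
  also have "\<dots> = Rep_omega (Abs_omega (y i) ^ \<alpha> i * ((\<Prod>i\<leftarrow>xs. Abs_omega (y i) ^ \<alpha> i) * Abs_omega c))"
    by (subst yi, subst gs_pow_Rep) (simp add: Rep_times)
  finally show ?case by (simp add: mult.assoc)
qed

definition ev :: "nat \<Rightarrow> ((nat \<Rightarrow> nat) \<Rightarrow> omega) \<Rightarrow> (nat \<Rightarrow> omega) \<Rightarrow> omega" where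
  "ev m P Y = (\<Sum>\<alpha>\<in>{\<alpha>. P \<alpha> \<noteq> 0}. P \<alpha> * (\<Prod>i<m. Y i ^ \<alpha> i))"

lemma eval_conv:
  assumes s: "s \<in> Omega" and P: "\<And>\<alpha>. P \<alpha> \<in> Omega" and fin: "finite {\<alpha>. P \<alpha> \<noteq> gs_zero}"
  shows "eval_diff_poly D n P s
     = Rep_omega (ev (Suc n) (\<lambda>\<alpha>. Abs_omega (P \<alpha>)) (\<lambda>i. Abs_omega ((gs_op D ^^ i) s)))"
proof -
  have supp: "{\<alpha>. Abs_omega (P \<alpha>) \<noteq> 0} = {\<alpha>. P \<alpha> \<noteq> gs_zero}"
    using P by (auto simp: zero_omega_def Abs_omega_inject Omega_zero)
  have "eval_diff_poly D n P s = (\<lambda>\<mu>. \<Sum>\<alpha>\<in>{\<alpha>. P \<alpha> \<noteq> gs_zero}.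
      Rep_omega ((\<Prod>i\<leftarrow>[0..<Suc n]. Abs_omega ((gs_op D ^^ i) s) ^ \<alpha> i) * Abs_omega (P \<alpha>)) \<mu>)"
    unfolding eval_diff_poly_def
    by (subst foldr_eq) (auto simp: gs_op_iter_Omega[OF s] P)
  also have "\<dots> = Rep_omega (\<Sum>\<alpha>\<in>{\<alpha>. P \<alpha> \<noteq> gs_zero}.
      (\<Prod>i\<leftarrow>[0..<Suc n]. Abs_omega ((gs_op D ^^ i) s) ^ \<alpha> i) * Abs_omega (P \<alpha>))"
    by (simp add: Rep_sum[OF fin])
  also have "(\<Sum>\<alpha>\<in>{\<alpha>. P \<alpha> \<noteq> gs_zero}.
      (\<Prod>i\<leftarrow>[0..<Suc n]. Abs_omega ((gs_op D ^^ i) s) ^ \<alpha> i) * Abs_omega (P \<alpha>))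
    = ev (Suc n) (\<lambda>\<alpha>. Abs_omega (P \<alpha>)) (\<lambda>i. Abs_omega ((gs_op D ^^ i) s))"
    unfolding ev_def supp
  proof (rule sum.cong[OF refl])
    fix \<alpha>
    have "(\<Prod>i\<leftarrow>[0..<Suc n]. Abs_omega ((gs_op D ^^ i) s) ^ \<alpha> i)
        = (\<Prod>i\<in>set [0..<Suc n]. Abs_omega ((gs_op D ^^ i) s) ^ \<alpha> i)"
      by (rule prod.distinct_set_conv_list[symmetric]) simp
    also have "set [0..<Suc n] = {..<Suc n}" by auto
    finally show "(\<Prod>i\<leftarrow>[0..<Suc n]. Abs_omega ((gs_op D ^^ i) s) ^ \<alpha> i) * Abs_omega (P \<alpha>)
       = Abs_omega (P \<alpha>) * (\<Prod>i<Suc n. Abs_omega ((gs_op D ^^ i) s) ^ \<alpha> i)"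
      by (simp add: mult.commute)
  qed
  finally show ?thesis .
qed

definition addl :: "(real \<Rightarrow> real) \<Rightarrow> bool" where
  "addl l \<longleftrightarrow> (\<forall>a b. l (a + b) = l a + l b)"

definition dlt :: "(real \<Rightarrow> real) \<Rightarrow> omega \<Rightarrow> omega" where
  "dlt l a = Abs_omega (\<lambda>\<mu>. complex_of_real (l \<mu>) * Rep_omega a \<mu>)"

lemma Rep_dlt: "Rep_omega (dlt l a) = (\<lambda>\<mu>. complex_of_real (l \<mu>) * Rep_omega a \<mu>)"
  unfolding dlt_def by (simp add: Abs_omega_inverse Omega_scale Rep_omega)

lemma dlt_add: "dlt l (a + b) = dlt l a + dlt l b"
  by (simp add: Rep_omega_inject[symmetric] Rep_dlt Rep_plus distrib_left)

lemma dlt_zero: "dlt l 0 = 0"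
  by (simp add: Rep_omega_inject[symmetric] Rep_dlt Rep_zero gs_zero_def)

lemma dlt_sum: "dlt l (\<Sum>x\<in>A. f x) = (\<Sum>x\<in>A. dlt l (f x))"
  by (induction A rule: infinite_finite_induct) (auto simp: dlt_zero dlt_add)

lemma dlt_mult:
  assumes l: "addl l"
  shows "dlt l (a * b) = dlt l a * b + a * dlt l b"
proof -
  have "Rep_omega (dlt l (a * b)) \<mu> = Rep_omega (dlt l a * b + a * dlt l b) \<mu>" for \<mu>
  proof -
    define A where "A = Rep_omega a"
    define B where "B = Rep_omega b"
    define T where "T = {\<nu>. A \<nu> \<noteq> 0 \<and> B (\<mu> - \<nu>) \<noteq> 0}"
    have fT: "finite T" unfolding T_def A_def B_def
    proof -
      obtain Lb where Lb: "\<forall>\<mu>. Rep_omega b \<mu> \<noteq> 0 \<longrightarrow> Lb \<le> \<mu>" using omega_lb[OF Rep_omega] by blast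
      have "{\<nu>. Rep_omega a \<nu> \<noteq> 0 \<and> Rep_omega b (\<mu> - \<nu>) \<noteq> 0} \<subseteq> {\<nu>. Rep_omega a \<nu> \<noteq> 0 \<and> \<nu> \<le> \<mu> - Lb}"
        using Lb by (auto simp: algebra_simps)
      thus "finite {\<nu>. Rep_omega a \<nu> \<noteq> 0 \<and> Rep_omega b (\<mu> - \<nu>) \<noteq> 0}"
        using omega_below_finite[OF Rep_omega] by (rule finite_subset)
    qed
    have e1: "gs_mult A B \<mu> = (\<Sum>\<nu>\<in>T. A \<nu> * B (\<mu> - \<nu>))"
      by (rule gs_mult_eq[OF fT]) (auto simp: T_def)
    have e2: "gs_mult (\<lambda>\<mu>. complex_of_real (l \<mu>) * A \<mu>) B \<mu> = (\<Sum>\<nu>\<in>T. (complex_of_real (l \<nu>) * A \<nu>) * B (\<mu> - \<nu>))"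
      by (rule gs_mult_eq[OF fT]) (auto simp: T_def)
    have e3: "gs_mult A (\<lambda>\<mu>. complex_of_real (l \<mu>) * B \<mu>) \<mu> = (\<Sum>\<nu>\<in>T. A \<nu> * (complex_of_real (l (\<mu> - \<nu>)) * B (\<mu> - \<nu>)))"
      by (rule gs_mult_eq[OF fT]) (auto simp: T_def)
    have ladd: "l \<mu> = l \<nu> + l (\<mu> - \<nu>)" for \<nu>
    proof -
      have "l (\<nu> + (\<mu> - \<nu>)) = l \<nu> + l (\<mu> - \<nu>)" using l unfolding addl_def by blast
      thus ?thesis by simp
    qed
    have "Rep_omega (dlt l (a * b)) \<mu> = complex_of_real (l \<mu>) * gs_mult A B \<mu>"
      by (simp add: Rep_dlt Rep_times A_def B_def)
    also have "\<dots> = (\<Sum>\<nu>\<in>T. (complex_of_real (l \<nu>) * A \<nu>) * B (\<mu> - \<nu>) + A \<nu> * (complex_of_real (l (\<mu> - \<nu>)) * B (\<mu> - \<nu>)))"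
      unfolding e1 sum_distrib_left
    proof (rule sum.cong[OF refl])
      fix \<nu>
      have "complex_of_real (l \<mu>) = complex_of_real (l \<nu>) + complex_of_real (l (\<mu> - \<nu>))"
        using ladd[of \<nu>] by simp
      thus "complex_of_real (l \<mu>) * (A \<nu> * B (\<mu> - \<nu>)) =
         complex_of_real (l \<nu>) * A \<nu> * B (\<mu> - \<nu>) + A \<nu> * (complex_of_real (l (\<mu> - \<nu>)) * B (\<mu> - \<nu>))"
        by (simp add: algebra_simps)
    qed
    also have "\<dots> = gs_mult (\<lambda>\<mu>. complex_of_real (l \<mu>) * A \<mu>) B \<mu> + gs_mult A (\<lambda>\<mu>. complex_of_real (l \<mu>) * B \<mu>) \<mu>"
      unfolding e2 e3 by (rule sum.distrib)
    also have "\<dots> = Rep_omega (dlt l a * b + a * dlt l b) \<mu>"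
      unfolding Rep_plus Rep_times Rep_dlt A_def B_def ..
    finally show ?thesis .
  qed
  thus ?thesis by (simp add: Rep_omega_inject[symmetric] fun_eq_iff)
qed

lemma dlt_const:
  assumes "\<forall>\<mu>. Rep_omega c \<mu> \<noteq> 0 \<longrightarrow> l \<mu> = 0"
  shows "dlt l c = 0"
  using assms by (auto simp: Rep_omega_inject[symmetric] Rep_dlt Rep_zero gs_zero_def fun_eq_iff)

lemma dlt_one:
  assumes l: "addl l"
  shows "dlt l 1 = 0"
proof (rule dlt_const, intro allI impI)
  fix \<mu> assume "Rep_omega 1 \<mu> \<noteq> 0"
  hence "\<mu> = 0" by (simp add: Rep_one gs_one_def split: if_splits)
  moreover have "l 0 = l 0 + l 0" using l unfolding addl_def by (metis add_0)
  ultimately show "l \<mu> = 0" by simp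
qed

lemma dlt_pow:
  assumes l: "addl l"
  shows "dlt l (a ^ k) = of_nat k * a ^ (k - 1) * dlt l a"
proof (induction k)
  case 0
  show ?case by (simp add: dlt_one[OF l])
next
  case (Suc k)
  have "dlt l (a ^ Suc k) = dlt l a * a ^ k + a * (of_nat k * a ^ (k - 1) * dlt l a)"
    by (simp add: dlt_mult[OF l] Suc)
  also have "\<dots> = of_nat (Suc k) * a ^ k * dlt l a"
  proof (cases k)
    case 0 thus ?thesis by simp
  next
    case (Suc k') thus ?thesis by (simp add: algebra_simps)
  qed
  finally show ?case by simp
qed

lemma dlt_prod:
  assumes l: "addl l" and fin: "finite I"
  shows "dlt l (\<Prod>i\<in>I. f i) = (\<Sum>k\<in>I. (\<Prod>i\<in>I - {k}. f i) * dlt l (f k))"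
  using fin
proof (induction I rule: finite_induct)
  case empty
  show ?case by (simp add: dlt_one[OF l])
next
  case (insert x F)
  have "dlt l (\<Prod>i\<in>insert x F. f i) = dlt l (f x) * (\<Prod>i\<in>F. f i) + f x * (\<Sum>k\<in>F. (\<Prod>i\<in>F - {k}. f i) * dlt l (f k))"
    using insert by (simp add: dlt_mult[OF l])
  also have "\<dots> = (\<Sum>k\<in>insert x F. (\<Prod>i\<in>insert x F - {k}. f i) * dlt l (f k))"
  proof -
    have "(\<Sum>k\<in>F. (\<Prod>i\<in>insert x F - {k}. f i) * dlt l (f k)) = (\<Sum>k\<in>F. f x * ((\<Prod>i\<in>F - {k}. f i) * dlt l (f k)))"
    proof (rule sum.cong[OF refl])
      fix k assume "k \<in> F"
      hence "insert x F - {k} = insert x (F - {k})" "x \<notin> F - {k}" using insert by auto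
      thus "(\<Prod>i\<in>insert x F - {k}. f i) * dlt l (f k) = f x * ((\<Prod>i\<in>F - {k}. f i) * dlt l (f k))"
        using insert by (simp add: mult.assoc)
    qed
    moreover have "insert x F - {x} = F" using insert by auto
    ultimately show ?thesis using insert by (simp add: sum_distrib_left mult.commute)
  qed
  finally show ?case .
qed

lemma dlt_ev:
  assumes l: "addl l" and fin: "finite {\<alpha>. P \<alpha> \<noteq> 0}" and c: "\<And>\<alpha>. dlt l (P \<alpha>) = 0"
  shows "dlt l (ev m P Y) = (\<Sum>j<m. (\<Sum>\<alpha>\<in>{\<alpha>. P \<alpha> \<noteq> 0}. P \<alpha> * (of_nat (\<alpha> j) * Y j ^ (\<alpha> j - 1) * (\<Prod>i\<in>{..<m}-{j}. Y i ^ \<alpha> i))) * dlt l (Y j))"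
proof -
  have "dlt l (ev m P Y) = (\<Sum>\<alpha>\<in>{\<alpha>. P \<alpha> \<noteq> 0}. P \<alpha> * (\<Sum>j<m. (of_nat (\<alpha> j) * Y j ^ (\<alpha> j - 1) * (\<Prod>i\<in>{..<m}-{j}. Y i ^ \<alpha> i)) * dlt l (Y j)))"
    unfolding ev_def dlt_sum
  proof (rule sum.cong[OF refl])
    fix \<alpha>
    have "dlt l (\<Prod>i<m. Y i ^ \<alpha> i) = (\<Sum>k<m. (\<Prod>i\<in>{..<m} - {k}. Y i ^ \<alpha> i) * dlt l (Y k ^ \<alpha> k))"
      by (rule dlt_prod[OF l]) simp
    also have "\<dots> = (\<Sum>j<m. (of_nat (\<alpha> j) * Y j ^ (\<alpha> j - 1) * (\<Prod>i\<in>{..<m}-{j}. Y i ^ \<alpha> i)) * dlt l (Y j))"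
      by (rule sum.cong[OF refl]) (simp add: dlt_pow[OF l] mult_ac)
    finally show "dlt l (P \<alpha> * (\<Prod>i<m. Y i ^ \<alpha> i)) = P \<alpha> * (\<Sum>j<m. (of_nat (\<alpha> j) * Y j ^ (\<alpha> j - 1) * (\<Prod>i\<in>{..<m}-{j}. Y i ^ \<alpha> i)) * dlt l (Y j))"
      by (simp add: dlt_mult[OF l] c)
  qed
  also have "\<dots> = (\<Sum>j<m. (\<Sum>\<alpha>\<in>{\<alpha>. P \<alpha> \<noteq> 0}. P \<alpha> * (of_nat (\<alpha> j) * Y j ^ (\<alpha> j - 1) * (\<Prod>i\<in>{..<m}-{j}. Y i ^ \<alpha> i))) * dlt l (Y j))"
    by (simp add: sum_distrib_left sum_distrib_right sum.swap[of _ "{..<m}"] mult.assoc)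
  finally show ?thesis .
qed

definition pd :: "nat \<Rightarrow> ((nat \<Rightarrow> nat) \<Rightarrow> omega) \<Rightarrow> (nat \<Rightarrow> nat) \<Rightarrow> omega" where
  "pd j P \<beta> = of_nat (Suc (\<beta> j)) * P (\<beta>(j := Suc (\<beta> j)))"

lemma of_nat_Suc_mult_eq0: "of_nat (Suc k) * (a::omega) = 0 \<longleftrightarrow> a = 0"
proof -
  have e: "Rep_omega (of_nat (Suc k) * a) = (\<lambda>\<mu>. of_nat (Suc k) * Rep_omega a \<mu>)"
    by (rule Rep_of_nat_times)
  show ?thesis unfolding Rep_eq_zero_iff e gs_zero_def fun_eq_iff
    by (simp del: of_nat_Suc)
qed

lemma pd_supp: "{\<beta>. pd j P \<beta> \<noteq> 0} = {\<beta>. P (\<beta>(j := Suc (\<beta> j))) \<noteq> 0}"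
  unfolding pd_def by (simp add: of_nat_Suc_mult_eq0 del: of_nat_Suc)

lemma pd_ev:
  assumes fin: "finite {\<alpha>. P \<alpha> \<noteq> 0}" and j: "j < m"
  shows "(\<Sum>\<alpha>\<in>{\<alpha>. P \<alpha> \<noteq> 0}. P \<alpha> * (of_nat (\<alpha> j) * Y j ^ (\<alpha> j - 1) * (\<Prod>i\<in>{..<m}-{j}. Y i ^ \<alpha> i)))
       = ev m (pd j P) Y"
proof -
  let ?S1 = "{\<alpha>. P \<alpha> \<noteq> 0 \<and> \<alpha> j \<noteq> 0}"
  have "(\<Sum>\<alpha>\<in>{\<alpha>. P \<alpha> \<noteq> 0}. P \<alpha> * (of_nat (\<alpha> j) * Y j ^ (\<alpha> j - 1) * (\<Prod>i\<in>{..<m}-{j}. Y i ^ \<alpha> i)))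
      = (\<Sum>\<alpha>\<in>?S1. P \<alpha> * (of_nat (\<alpha> j) * Y j ^ (\<alpha> j - 1) * (\<Prod>i\<in>{..<m}-{j}. Y i ^ \<alpha> i)))"
  proof (rule sum.mono_neutral_right[OF fin])
    show "?S1 \<subseteq> {\<alpha>. P \<alpha> \<noteq> 0}" by auto
    show "\<forall>\<alpha>\<in>{\<alpha>. P \<alpha> \<noteq> 0} - ?S1. P \<alpha> * (of_nat (\<alpha> j) * Y j ^ (\<alpha> j - 1) * (\<Prod>i\<in>{..<m}-{j}. Y i ^ \<alpha> i)) = 0"
    proof
      fix \<alpha> assume "\<alpha> \<in> {\<alpha>. P \<alpha> \<noteq> 0} - ?S1"
      hence "\<alpha> j = 0" by auto
      thus "P \<alpha> * (of_nat (\<alpha> j) * Y j ^ (\<alpha> j - 1) * (\<Prod>i\<in>{..<m}-{j}. Y i ^ \<alpha> i)) = 0" by simp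
    qed
  qed
  also have "\<dots> = ev m (pd j P) Y"
    unfolding ev_def pd_supp
  proof (rule sum.reindex_bij_witness[of _ "\<lambda>\<beta>. \<beta>(j := Suc (\<beta> j))" "\<lambda>\<alpha>. \<alpha>(j := \<alpha> j - 1)"])
    fix \<alpha> assume a: "\<alpha> \<in> ?S1"
    define \<beta> where "\<beta> = \<alpha>(j := \<alpha> j - 1)"
    have aeq: "\<beta>(j := Suc (\<beta> j)) = \<alpha>" using a by (auto simp: \<beta>_def)
    have "(\<Prod>i<m. Y i ^ \<beta> i) = Y j ^ \<beta> j * (\<Prod>i\<in>{..<m}-{j}. Y i ^ \<beta> i)"
      using j by (subst prod.remove[of _ j]) auto
    moreover have "(\<Prod>i\<in>{..<m}-{j}. Y i ^ (\<beta>(j := Suc (\<beta> j))) i) = (\<Prod>i\<in>{..<m}-{j}. Y i ^ \<beta> i)"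
      by (rule prod.cong) auto
    ultimately have key: "P (\<beta>(j := Suc (\<beta> j))) * (of_nat ((\<beta>(j := Suc (\<beta> j))) j) * Y j ^ ((\<beta>(j := Suc (\<beta> j))) j - 1) *
          (\<Prod>i\<in>{..<m} - {j}. Y i ^ (\<beta>(j := Suc (\<beta> j))) i)) = pd j P \<beta> * (\<Prod>i<m. Y i ^ \<beta> i)"
      by (simp add: pd_def mult_ac)
    show "pd j P (\<alpha>(j := \<alpha> j - 1)) * (\<Prod>i<m. Y i ^ (\<alpha>(j := \<alpha> j - 1)) i)
        = P \<alpha> * (of_nat (\<alpha> j) * Y j ^ (\<alpha> j - 1) * (\<Prod>i\<in>{..<m}-{j}. Y i ^ \<alpha> i))"
      using key[unfolded aeq, unfolded \<beta>_def] by (rule sym)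
  qed auto
  finally show ?thesis .
qed

lemma sum_upd:
  fixes \<beta> :: "nat \<Rightarrow> nat" and j m :: nat
  assumes "j < m"
  shows "(\<Sum>i<m. (\<beta>(j := Suc (\<beta> j))) i) = Suc (\<Sum>i<m. \<beta> i)"
proof -
  have "(\<Sum>i<m. (\<beta>(j := Suc (\<beta> j))) i) = Suc (\<beta> j) + (\<Sum>i\<in>{..<m}-{j}. (\<beta>(j := Suc (\<beta> j))) i)"
    using assms by (subst sum.remove[of _ j]) auto
  also have "(\<Sum>i\<in>{..<m}-{j}. (\<beta>(j := Suc (\<beta> j))) i) = (\<Sum>i\<in>{..<m}-{j}. \<beta> i)"
    by (rule sum.cong) auto
  also have "Suc (\<beta> j) + (\<Sum>i\<in>{..<m}-{j}. \<beta> i) = Suc (\<Sum>i<m. \<beta> i)"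
    using assms by (subst (2) sum.remove[of _ j]) auto
  finally show ?thesis .
qed

definition good :: "nat \<Rightarrow> ((nat \<Rightarrow> nat) \<Rightarrow> omega) \<Rightarrow> bool" where
  "good m P \<longleftrightarrow> finite {\<alpha>. P \<alpha> \<noteq> 0} \<and> (\<forall>\<alpha>. P \<alpha> \<noteq> 0 \<longrightarrow> (\<forall>i\<ge>m. \<alpha> i = 0))
     \<and> (\<forall>\<alpha> \<mu>. Rep_omega (P \<alpha>) \<mu> \<noteq> 0 \<longrightarrow> \<mu> \<in> \<rat>)"

lemma good_pd:
  assumes g: "good m P" and j: "j < m"
  shows "good m (pd j P)"
proof -
  let ?h = "\<lambda>\<beta>::nat\<Rightarrow>nat. \<beta>(j := Suc (\<beta> j))"
  have inj: "inj ?h"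
  proof (rule injI)
    fix x y :: "nat \<Rightarrow> nat" assume "x(j := Suc (x j)) = y(j := Suc (y j))"
    hence "\<forall>i. (x(j := Suc (x j))) i = (y(j := Suc (y j))) i" by simp
    hence "\<forall>i. x i = y i" by (metis fun_upd_apply nat.inject)
    thus "x = y" by blast
  qed
  have e: "{\<beta>. pd j P \<beta> \<noteq> 0} = ?h -` {\<alpha>. P \<alpha> \<noteq> 0}" unfolding pd_supp by auto
  have "finite (?h -` {\<alpha>. P \<alpha> \<noteq> 0})"
    by (rule finite_vimageI) (use g inj in \<open>auto simp: good_def\<close>)
  hence f: "finite {\<beta>. pd j P \<beta> \<noteq> 0}" unfolding e .
  have v: "\<forall>\<beta>. pd j P \<beta> \<noteq> 0 \<longrightarrow> (\<forall>i\<ge>m. \<beta> i = 0)"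
  proof (intro allI impI)
    fix \<beta> i assume "pd j P \<beta> \<noteq> 0" "m \<le> i"
    hence "P (?h \<beta>) \<noteq> 0" "i \<noteq> j" using pd_supp[of j P] j by auto
    hence "(?h \<beta>) i = 0" using g \<open>m \<le> i\<close> unfolding good_def by blast
    thus "\<beta> i = 0" using \<open>i \<noteq> j\<close> by simp
  qed
  have r: "\<forall>\<beta> \<mu>. Rep_omega (pd j P \<beta>) \<mu> \<noteq> 0 \<longrightarrow> \<mu> \<in> \<rat>"
    using g unfolding good_def pd_def by (simp add: Rep_of_nat_times del: of_nat_Suc)
  show ?thesis using f v r unfolding good_def by blast
qed

lemma ev_const:
  assumes g: "good m P" and z: "\<forall>\<alpha>. P \<alpha> \<noteq> 0 \<longrightarrow> (\<forall>i<m. \<alpha> i = 0)" and nz: "P \<alpha>0 \<noteq> 0"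
  shows "ev m P Y \<noteq> 0"
proof -
  have "\<alpha> = (\<lambda>_. 0)" if "P \<alpha> \<noteq> 0" for \<alpha>
  proof
    fix i show "\<alpha> i = 0" using g z that unfolding good_def by (cases "i < m") auto
  qed
  hence S: "{\<alpha>. P \<alpha> \<noteq> 0} = {(\<lambda>_. 0)}" using nz by blast
  have "ev m P Y = P (\<lambda>_. 0)" unfolding ev_def S by simp
  thus ?thesis using S by auto
qed

lemma core_step:
  assumes KEY: "\<forall>Q. (\<exists>k<m. Q k \<noteq> 0) \<longrightarrow> (\<exists>l. addl l \<and> (\<forall>q\<in>\<rat>. l q = 0) \<and> (\<Sum>j<m. Q j * dlt l (Y j)) \<noteq> 0)"
    and g: "good m P" and nz: "P \<alpha>0 \<noteq> 0"
    and IH: "\<forall>j<m. (\<exists>\<beta>. pd j P \<beta> \<noteq> 0) \<longrightarrow> ev m (pd j P) Y \<noteq> 0"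
  shows "ev m P Y \<noteq> 0"
proof (cases "\<forall>\<alpha>. P \<alpha> \<noteq> 0 \<longrightarrow> (\<forall>i<m. \<alpha> i = 0)")
  case True thus ?thesis using ev_const[OF g _ nz] by blast
next
  case False
  then obtain \<alpha> j where a: "P \<alpha> \<noteq> 0" "j < m" "\<alpha> j \<noteq> 0" by blast
  define Q where "Q k = ev m (pd k P) Y" for k
  have "(\<alpha>(j := \<alpha> j - 1))(j := Suc ((\<alpha>(j := \<alpha> j - 1)) j)) = \<alpha>" using a(3) by auto
  hence "pd j P (\<alpha>(j := \<alpha> j - 1)) \<noteq> 0" using a(1) pd_supp[of j P] by (metis (mono_tags, lifting) mem_Collect_eq)
  hence "Q j \<noteq> 0" using IH a(2) unfolding Q_def by blast
  then obtain l where l: "addl l" "\<forall>q\<in>\<rat>. l q = 0" "(\<Sum>j<m. Q j * dlt l (Y j)) \<noteq> 0"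
    using KEY a(2) by blast
  have fin: "finite {\<alpha>. P \<alpha> \<noteq> 0}" using g unfolding good_def by blast
  have c: "dlt l (P \<beta>) = 0" for \<beta>
    by (rule dlt_const) (use g l(2) in \<open>auto simp: good_def\<close>)
  have "dlt l (ev m P Y) = (\<Sum>j<m. Q j * dlt l (Y j))"
    unfolding dlt_ev[OF l(1) fin c] Q_def
  proof (rule sum.cong[OF refl])
    fix x assume "x \<in> {..<m}"
    thus "(\<Sum>\<alpha>\<in>{\<alpha>. P \<alpha> \<noteq> 0}. P \<alpha> * (of_nat (\<alpha> x) * Y x ^ (\<alpha> x - 1) * (\<Prod>i\<in>{..<m}-{x}. Y i ^ \<alpha> i))) * dlt l (Y x)
        = ev m (pd x P) Y * dlt l (Y x)"
      using pd_ev[OF fin, of x m Y] by simp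
  qed
  thus ?thesis using l(3) dlt_zero by force
qed

lemma core:
  assumes KEY: "\<forall>Q. (\<exists>k<m. Q k \<noteq> 0) \<longrightarrow> (\<exists>l. addl l \<and> (\<forall>q\<in>\<rat>. l q = 0) \<and> (\<Sum>j<m. Q j * dlt l (Y j)) \<noteq> 0)"
  shows "good m P \<Longrightarrow> (\<forall>\<alpha>. P \<alpha> \<noteq> 0 \<longrightarrow> (\<Sum>i<m. \<alpha> i) \<le> d) \<Longrightarrow> P \<alpha>0 \<noteq> 0 \<Longrightarrow> ev m P Y \<noteq> 0"
proof (induction d arbitrary: P \<alpha>0)
  case 0
  show ?case
  proof (rule core_step[of m Y P, OF KEY 0(1) 0(3)], intro allI impI)
    fix j assume j: "j < m" and "\<exists>\<beta>. pd j P \<beta> \<noteq> 0"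
    then obtain \<beta> where "P (\<beta>(j := Suc (\<beta> j))) \<noteq> 0" using pd_supp[of j P] by blast
    hence "(\<Sum>i<m. (\<beta>(j := Suc (\<beta> j))) i) \<le> 0" using 0(2) by blast
    hence False using sum_upd[OF j, of \<beta>] by linarith
    thus "ev m (pd j P) Y \<noteq> 0" by blast
  qed
next
  case (Suc d)
  show ?case
  proof (rule core_step[of m Y P, OF KEY Suc.prems(1) Suc.prems(3)], intro allI impI)
    fix j assume j: "j < m" and "\<exists>\<beta>. pd j P \<beta> \<noteq> 0"
    then obtain \<beta> where b: "pd j P \<beta> \<noteq> 0" by blast
    have "\<forall>\<beta>. pd j P \<beta> \<noteq> 0 \<longrightarrow> (\<Sum>i<m. \<beta> i) \<le> d"
    proof (intro allI impI)
      fix \<beta> assume "pd j P \<beta> \<noteq> 0"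
      hence "P (\<beta>(j := Suc (\<beta> j))) \<noteq> 0" using pd_supp[of j P] by blast
      hence "(\<Sum>i<m. (\<beta>(j := Suc (\<beta> j))) i) \<le> Suc d" using Suc(3) by blast
      thus "(\<Sum>i<m. \<beta> i) \<le> d" using sum_upd[OF j, of \<beta>] by linarith
    qed
    from Suc.IH[of "pd j P" \<beta>, OF good_pd[OF Suc.prems(1) j] this b] show "ev m (pd j P) Y \<noteq> 0" .
  qed
qed

definition rs :: "rat \<Rightarrow> real \<Rightarrow> real" where "rs r x = real_of_rat r * x"

interpretation Q: vector_space rs
  by unfold_locales (auto simp: rs_def algebra_simps of_rat_add of_rat_mult)

interpretation QQ: vector_space_pair rs rs ..

lemma rat_span_eq: "rat_span E = Q.span E"
  unfolding rat_span_def Q.span_explicit rs_def by blast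

lemma exists_ell:
  assumes "\<nu>0 \<notin> Q.span U"
  shows "\<exists>lf::real\<Rightarrow>real. (\<forall>a b. lf (a+b) = lf a + lf b) \<and> (\<forall>u\<in>U. lf u = 0) \<and> lf \<nu>0 = 1"
proof -
  obtain B where B: "B \<subseteq> U" "Q.independent B" "U \<subseteq> Q.span B"
    using Q.maximal_independent_subset by blast
  have "Q.span B \<subseteq> Q.span U" using B(1) Q.span_mono by blast
  hence nB: "\<nu>0 \<notin> Q.span B" using assms by blast
  hence ind: "Q.independent (insert \<nu>0 B)" using B(2) Q.independent_insertI by blast
  have "\<nu>0 \<notin> B" using nB Q.span_base by blast
  obtain g where g: "Vector_Spaces.linear rs rs g" "\<forall>x\<in>insert \<nu>0 B. g x = (if x = \<nu>0 then 1 else 0)"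
    using QQ.linear_independent_extend[OF ind, of "\<lambda>x. if x = \<nu>0 then 1 else 0"] by blast
  have add: "\<forall>a b. g (a+b) = g a + g b" using QQ.linear_add[OF g(1)] by blast
  have "\<forall>u\<in>U. g u = 0"
  proof
    fix u assume "u \<in> U"
    hence "u \<in> Q.span B" using B(3) by blast
    thus "g u = 0" using QQ.linear_eq_0_on_span[OF g(1)] g(2) \<open>\<nu>0 \<notin> B\<close>
      by (metis insertCI)
  qed
  moreover have "g \<nu>0 = 1" using g(2) by simp
  ultimately show ?thesis using add by blast
qed



lemma rat_in_span1: "x \<in> \<rat> \<Longrightarrow> x \<in> Q.span {1}"
proof -
  assume "x \<in> \<rat>"
  then obtain r where "x = real_of_rat r" by (auto elim: Rats_cases)
  hence "x = rs r 1" by (simp add: rs_def)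
  thus ?thesis by (metis Q.span_base Q.span_scale singletonI)
qed

lemma indep_T:
  assumes "indep_mod_Q m v"
  shows "inj_on v {..<m}" "\<forall>i<m. v i \<notin> \<rat>" "Q.independent (insert 1 (v ` {..<m}))"
proof -
  show nq: "\<forall>i<m. v i \<notin> \<rat>"
  proof (intro allI impI)
    fix i assume i: "i < m"
    show "v i \<notin> \<rat>"
    proof
      assume "v i \<in> \<rat>"
      define r where "r = (\<lambda>j. if j = i then (1::rat) else 0)"
      have "(\<Sum>j<m. real_of_rat (r j) * v j) = v i"
      proof -
        have "(\<Sum>j<m. real_of_rat (r j) * v j) = (\<Sum>j<m. if j = i then v j else 0)"
          by (rule sum.cong) (auto simp: r_def)
        thus ?thesis using i by simp
      qed
      hence "r i = 0" using assms \<open>v i \<in> \<rat>\<close> i unfolding indep_mod_Q_def by metis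
      thus False by (simp add: r_def)
    qed
  qed
  show inj: "inj_on v {..<m}"
  proof (rule inj_onI)
    fix i j assume ij: "i \<in> {..<m}" "j \<in> {..<m}" "v i = v j"
    show "i = j"
    proof (rule ccontr)
      assume ne: "i \<noteq> j"
      define r where "r = (\<lambda>k. if k = i then (1::rat) else if k = j then -1 else 0)"
      have "(\<Sum>k<m. real_of_rat (r k) * v k) = (\<Sum>k<m. (if k = i then v k else 0) + (if k = j then - v k else 0))"
        by (rule sum.cong) (auto simp: r_def ne)
      also have "\<dots> = v i - v j" using ij by (simp add: sum.distrib)
      finally have "(\<Sum>k<m. real_of_rat (r k) * v k) \<in> \<rat>" using ij by simp
      hence "r i = 0" using assms ij unfolding indep_mod_Q_def by blast
      thus False by (simp add: r_def)
    qed
  qed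
  show "Q.independent (insert 1 (v ` {..<m}))"
  proof
    assume dep: "Q.dependent (insert 1 (v ` {..<m}))"
    have fin: "finite (insert 1 (v ` {..<m}))" by simp
    obtain u where u: "\<exists>x\<in>insert 1 (v ` {..<m}). u x \<noteq> 0"
      "(\<Sum>x\<in>insert 1 (v ` {..<m}). rs (u x) x) = 0"
      using dep Q.dependent_finite[OF fin] by blast
    have n1: "1 \<notin> v ` {..<m}" using nq by auto
    have "(\<Sum>x\<in>insert 1 (v ` {..<m}). rs (u x) x) = rs (u 1) 1 + (\<Sum>x\<in>v ` {..<m}. rs (u x) x)"
      using n1 by simp
    also have "(\<Sum>x\<in>v ` {..<m}. rs (u x) x) = (\<Sum>i<m. real_of_rat (u (v i)) * v i)"
      using inj by (simp add: sum.reindex rs_def)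
    finally have eq: "(\<Sum>i<m. real_of_rat (u (v i)) * v i) = - real_of_rat (u 1)"
      using u(2) by (simp add: rs_def)
    hence "(\<Sum>i<m. real_of_rat (u (v i)) * v i) \<in> \<rat>" by simp
    note q = this
    have I: "\<forall>r. (\<Sum>i<m. real_of_rat (r i) * v i) \<in> \<rat> \<longrightarrow> (\<forall>i<m. r i = 0)"
      using assms unfolding indep_mod_Q_def .
    have z: "\<forall>i<m. u (v i) = 0"
      using I[rule_format, OF q] by blast
    hence "(\<Sum>i<m. real_of_rat (u (v i)) * v i) = 0" by simp
    hence "u 1 = 0" using eq by simp
    thus False using u(1) z by auto
  qed
qed

lemma new_exps:
  assumes s: "s \<in> Omega" and dim: "dim_mod_Q_gt (gsupp s) n"
  shows "\<exists>N. N \<subseteq> {\<nu> \<in> gsupp s. \<nu> \<notin> Q.span (\<rat> \<union> {\<nu>'\<in>gsupp s. \<nu>' < \<nu>})} \<and> finite N \<and> card N = Suc n"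
proof -
  define New where "New = {\<nu> \<in> gsupp s. \<nu> \<notin> Q.span (\<rat> \<union> {\<nu>'\<in>gsupp s. \<nu>' < \<nu>})}"
  define f where "f \<nu> = card {\<nu>'\<in>gsupp s. \<nu>' < \<nu>}" for \<nu>
  have finb: "finite {\<nu>'\<in>gsupp s. \<nu>' < \<nu>}" for \<nu>
    by (rule finite_subset[OF _ omega_below_finite[OF s, of \<nu>]]) (auto simp: gsupp_def)
  have main: "\<nu> \<in> gsupp s \<longrightarrow> \<nu> \<in> Q.span (\<rat> \<union> New)" for \<nu>
  proof (induction \<nu> rule: measure_induct_rule[of f])
    case (less \<nu>)
    show ?case
    proof
      assume nu: "\<nu> \<in> gsupp s"
      show "\<nu> \<in> Q.span (\<rat> \<union> New)"
      proof (cases "\<nu> \<in> New")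
        case True thus ?thesis by (simp add: Q.span_base)
      next
        case False
        hence in1: "\<nu> \<in> Q.span (\<rat> \<union> {\<nu>'\<in>gsupp s. \<nu>' < \<nu>})" using nu unfolding New_def by blast
        have "\<rat> \<union> {\<nu>'\<in>gsupp s. \<nu>' < \<nu>} \<subseteq> Q.span (\<rat> \<union> New)"
        proof
          fix x assume x: "x \<in> \<rat> \<union> {\<nu>'\<in>gsupp s. \<nu>' < \<nu>}"
          show "x \<in> Q.span (\<rat> \<union> New)"
          proof (cases "x \<in> \<rat>")
            case True thus ?thesis by (simp add: Q.span_base)
          next
            case False
            hence x2: "x \<in> gsupp s" "x < \<nu>" using x by auto
            have "{\<nu>'\<in>gsupp s. \<nu>' < x} \<subset> {\<nu>'\<in>gsupp s. \<nu>' < \<nu>}" using x2 by auto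
            hence "f x < f \<nu>" unfolding f_def by (rule psubset_card_mono[OF finb])
            thus ?thesis using less x2 by blast
          qed
        qed
        hence "Q.span (\<rat> \<union> {\<nu>'\<in>gsupp s. \<nu>' < \<nu>}) \<subseteq> Q.span (\<rat> \<union> New)"
          by (simp add: Q.span_minimal)
        thus ?thesis using in1 by blast
      qed
    qed
  qed
  have sp1: "Q.span (\<rat> \<union> New) \<subseteq> Q.span (insert 1 New)"
  proof (rule Q.span_minimal)
    show "\<rat> \<union> New \<subseteq> Q.span (insert 1 New)"
    proof
      fix x assume "x \<in> \<rat> \<union> New"
      thus "x \<in> Q.span (insert 1 New)"
      proof
        assume "x \<in> \<rat>"
        hence "x \<in> Q.span {1}" by (rule rat_in_span1)
        thus ?thesis using Q.span_mono[of "{1}" "insert 1 New"] by blast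
      qed (simp add: Q.span_base)
    qed
  qed simp
  obtain v where v: "\<forall>i<Suc n. v i \<in> rat_span (gsupp s \<union> \<rat>)" "indep_mod_Q (Suc n) v"
    using dim unfolding dim_mod_Q_gt_def by blast
  have "gsupp s \<union> \<rat> \<subseteq> Q.span (\<rat> \<union> New)"
  proof
    fix x assume "x \<in> gsupp s \<union> \<rat>"
    thus "x \<in> Q.span (\<rat> \<union> New)"
    proof
      assume "x \<in> gsupp s" thus ?thesis using main by blast
    next
      assume "x \<in> \<rat>" thus ?thesis by (simp add: Q.span_base)
    qed
  qed
  hence "Q.span (gsupp s \<union> \<rat>) \<subseteq> Q.span (\<rat> \<union> New)" by (simp add: Q.span_minimal)
  hence vin': "v ` {..<Suc n} \<subseteq> Q.span (insert 1 New)"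
    using v(1) sp1 unfolding rat_span_eq by blast
  have vin: "insert 1 (v ` {..<Suc n}) \<subseteq> Q.span (insert 1 New)"
    using vin' Q.span_base[of 1 "insert 1 New"] by blast
  have cardT: "card (insert 1 (v ` {..<Suc n})) = Suc (Suc n)"
  proof -
    have "1 \<notin> v ` {..<Suc n}" using indep_T(2)[OF v(2)] by auto
    thus ?thesis using indep_T(1)[OF v(2)] by (simp add: card_image)
  qed
  show ?thesis
  proof (cases "finite New")
    case False
    then obtain B where "finite B" "card B = Suc n" "B \<subseteq> New" using infinite_arbitrarily_large by blast
    thus ?thesis unfolding New_def by blast
  next
    case True
    have "card (insert 1 (v ` {..<Suc n})) \<le> card (insert 1 New)"
      using Q.independent_span_bound[OF _ indep_T(3)[OF v(2)] vin] True by simp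
    moreover have "card (insert 1 New) \<le> Suc (card New)" using True by (simp add: card_insert_if)
    ultimately have "Suc n \<le> card New" using cardT by linarith
    then obtain B where "B \<subseteq> New" "card B = Suc n" "finite B" by (rule obtain_subset_with_card_n)
    thus ?thesis unfolding New_def by blast
  qed
qed

definition sig :: "gop \<Rightarrow> real" where
  "sig D = (case D of Deriv \<Rightarrow> 1 | _ \<Rightarrow> 0)"
definition zf :: "gop \<Rightarrow> real \<Rightarrow> complex" where
  "zf D x = (case D of QDiff q \<Rightarrow> exp (complex_of_real x * Ln q) | _ \<Rightarrow> complex_of_real x)"
definition bp :: "gop \<Rightarrow> nat \<Rightarrow> complex poly" where
  "bp D j = (case D of Deriv \<Rightarrow> (\<Prod>i<j. [:- of_nat i, 1:]) | _ \<Rightarrow> monom 1 j)"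

lemma gs_op_Deriv_apply: "gs_op Deriv f \<rho> = complex_of_real (\<rho> + 1) * f (\<rho> + 1)"
  by simp

lemma D_iter: "(gs_op D ^^ j) s \<rho> = poly (bp D j) (zf D (\<rho> + sig D * real j)) * s (\<rho> + sig D * real j)"
proof (cases D)
  case Deriv
  show ?thesis
  proof (induction j arbitrary: \<rho>)
    case 0 thus ?case by (simp add: Deriv bp_def)
  next
    case (Suc j)
    have "(gs_op D ^^ Suc j) s \<rho> = complex_of_real (\<rho> + 1) * (gs_op D ^^ j) s (\<rho> + 1)"
      using Deriv by (simp del: gs_op.simps add: gs_op_Deriv_apply)
    also have "\<dots> = complex_of_real (\<rho> + 1) * (poly (bp D j) (complex_of_real (\<rho> + 1 + real j)) * s (\<rho> + 1 + real j))"
      using Suc[of "\<rho> + 1"] Deriv by (simp add: sig_def zf_def del: gs_op.simps)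
    also have "\<dots> = poly (bp D (Suc j)) (complex_of_real (\<rho> + real (Suc j))) * s (\<rho> + real (Suc j))"
    proof -
      have e: "bp D (Suc j) = bp D j * [:- of_nat j, 1:]" using Deriv by (simp add: bp_def)
      have "poly (bp D (Suc j)) (complex_of_real (\<rho> + real (Suc j)))
          = poly (bp D j) (complex_of_real (\<rho> + real (Suc j))) * (complex_of_real (\<rho> + real (Suc j)) - of_nat j)"
        unfolding e poly_mult by (simp add: algebra_simps)
      moreover have "complex_of_real (\<rho> + real (Suc j)) - of_nat j = complex_of_real (\<rho> + 1)" by simp
      moreover have "\<rho> + real (Suc j) = \<rho> + 1 + real j" by simp
      ultimately show ?thesis by (simp add: mult_ac add.assoc)
    qed
    finally show ?case using Deriv by (simp add: sig_def zf_def del: gs_op.simps)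
  qed
next
  case Euler
  show ?thesis
    by (induction j arbitrary: \<rho>) (auto simp: Euler bp_def sig_def zf_def poly_monom)
next
  case (QDiff q)
  show ?thesis
    by (induction j arbitrary: \<rho>) (auto simp: QDiff bp_def sig_def zf_def poly_monom)
qed

lemma bp_deg: "degree (bp D j) = j \<and> coeff (bp D j) j = 1"
proof (cases D)
  case Deriv
  show ?thesis
  proof (induction j)
    case 0 thus ?case by (simp add: Deriv bp_def)
  next
    case (Suc j)
    have e: "bp D (Suc j) = bp D j * [:- of_nat j, 1:]" using Deriv by (simp add: bp_def)
    have nz: "bp D j \<noteq> 0" using Suc by auto
    have d: "degree (bp D (Suc j)) = Suc j" unfolding e by (subst degree_mult_eq) (use nz Suc in auto)
    have "lead_coeff (bp D (Suc j)) = 1" unfolding e lead_coeff_mult using Suc by simp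
    thus ?case using d by simp
  qed
qed (auto simp: bp_def degree_monom_eq)

lemma sig_rat: "sig D * real j \<in> \<rat>"
  by (cases D) (auto simp: sig_def)

lemma zf_inj:
  assumes "admissible_op D"
  shows "inj (zf D)"
proof (cases D)
  case (QDiff q)
  hence q: "q \<noteq> 0" "cmod q \<noteq> 1" using assms by (auto simp: admissible_op_def)
  have lq: "ln (cmod q) \<noteq> 0" using q by simp
  show ?thesis
  proof (rule injI)
    fix x y assume "zf D x = zf D y"
    hence "exp (complex_of_real x * Ln q) = exp (complex_of_real y * Ln q)" using QDiff by (simp add: zf_def)
    hence "norm (exp (complex_of_real x * Ln q)) = norm (exp (complex_of_real y * Ln q))" by simp
    hence "exp (x * ln (cmod q)) = exp (y * ln (cmod q))" using q by (simp add: norm_exp_eq_Re)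
    hence "x * ln (cmod q) = y * ln (cmod q)" by simp
    thus "x = y" using lq by simp
  qed
qed (auto simp: zf_def inj_def)

lemma coeffs_zero:
  fixes b :: "nat \<Rightarrow> complex poly"
  assumes deg: "\<And>j. degree (b j) = j \<and> coeff (b j) j = 1"
  shows "(\<Sum>j<k. smult (a j) (b j)) = 0 \<Longrightarrow> \<forall>j<k. a j = 0"
proof (induction k)
  case 0 thus ?case by simp
next
  case (Suc k)
  have "coeff (\<Sum>j<Suc k. smult (a j) (b j)) k = (\<Sum>j<Suc k. a j * coeff (b j) k)"
    by (simp add: coeff_sum)
  also have "\<dots> = a k"
  proof -
    have "(\<Sum>j<k. a j * coeff (b j) k) = 0"
    proof (rule sum.neutral, intro ballI)
      fix j assume "j \<in> {..<k}"
      hence "degree (b j) < k" using deg[of j] by simp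
      thus "a j * coeff (b j) k = 0" by (simp add: coeff_eq_0)
    qed
    thus ?thesis using deg[of k] by simp
  qed
  finally have c: "coeff (\<Sum>j<Suc k. smult (a j) (b j)) k = a k" .
  have ak: "a k = 0" using c[unfolded Suc.prems] by simp
  hence "(\<Sum>j<k. smult (a j) (b j)) = 0" using Suc.prems by simp
  hence "\<forall>j<k. a j = 0" by (rule Suc.IH)
  thus ?case using ak less_Suc_eq by auto
qed

lemma poly_lemma:
  fixes b :: "nat \<Rightarrow> complex poly" and z :: "real \<Rightarrow> complex"
  assumes deg: "\<And>j. degree (b j) = j \<and> coeff (b j) j = 1"
    and fin: "finite N" and card: "card N = Suc n" and inj: "inj_on z N"
    and roots: "\<forall>\<nu>\<in>N. (\<Sum>j<Suc n. a j * poly (b j) (z \<nu>)) = 0"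
  shows "\<forall>j<Suc n. a j = 0"
proof -
  define p where "p = (\<Sum>j<Suc n. smult (a j) (b j))"
  have pv: "poly p x = (\<Sum>j<Suc n. a j * poly (b j) x)" for x by (simp add: p_def poly_sum)
  have dp: "degree p \<le> n"
    unfolding p_def
    by (rule degree_sum_le) (auto intro: order.trans[OF degree_smult_le] simp: deg less_Suc_eq_le)
  have "p = 0"
  proof (rule ccontr)
    assume "p \<noteq> 0"
    hence "card {x. poly p x = 0} \<le> degree p" by (rule card_poly_roots_bound)
    moreover have "z ` N \<subseteq> {x. poly p x = 0}" using roots pv by auto
    hence "card (z ` N) \<le> card {x. poly p x = 0}"
      using poly_roots_finite[OF \<open>p \<noteq> 0\<close>] by (intro card_mono) auto
    moreover have "card (z ` N) = Suc n" using card inj by (simp add: card_image)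
    ultimately show False using dp by linarith
  qed
  thus ?thesis using coeffs_zero[OF deg] unfolding p_def by blast
qed

lemma term_formula:
  fixes q :: omega
  assumes s: "s \<in> Omega" and l: "addl l" and lq: "\<forall>r\<in>\<rat>. l r = 0"
    and lE: "\<forall>\<nu>'. s \<nu>' \<noteq> 0 \<and> \<nu>' < \<nu>0 \<longrightarrow> l \<nu>' = 0"
    and low: "\<forall>\<mu>. Rep_omega q \<mu> \<noteq> 0 \<longrightarrow> w + sig D * real j \<le> \<mu>"
  shows "Rep_omega (q * dlt l (Abs_omega ((gs_op D ^^ j) s))) (w + \<nu>0)
       = Rep_omega q (w + sig D * real j) * (complex_of_real (l \<nu>0) * (poly (bp D j) (zf D \<nu>0) * s \<nu>0))"
proof -
  define F where "F = (gs_op D ^^ j) s"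
  define c where "c = sig D * real j"
  have cq: "l c = 0" using lq sig_rat unfolding c_def by blast
  have ladd: "l (a + b) = l a + l b" for a b using l unfolding addl_def by blast
  have RF: "Rep_omega (Abs_omega F) = F" unfolding F_def using gs_op_iter_Omega[OF s] by (simp add: Abs_omega_inverse)
  define g where "g = (\<lambda>\<rho>. complex_of_real (l \<rho>) * F \<rho>)"
  have "Rep_omega (q * dlt l (Abs_omega F)) (w + \<nu>0) = gs_mult (Rep_omega q) g (w + \<nu>0)"
    by (simp add: Rep_times Rep_dlt RF g_def)
  also have "\<dots> = (\<Sum>\<nu>\<in>{w + c}. Rep_omega q \<nu> * g (w + \<nu>0 - \<nu>))"
  proof (rule gs_mult_eq, simp, rule subsetI)
    fix \<nu> assume "\<nu> \<in> {\<nu>. Rep_omega q \<nu> \<noteq> 0 \<and> g (w + \<nu>0 - \<nu>) \<noteq> 0}"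
    hence h: "Rep_omega q \<nu> \<noteq> 0" "g (w + \<nu>0 - \<nu>) \<noteq> 0" by auto
    define \<rho> where "\<rho> = w + \<nu>0 - \<nu>"
    have "w + c \<le> \<nu>" using low h(1) unfolding c_def by blast
    hence le: "\<rho> + c \<le> \<nu>0" unfolding \<rho>_def by simp
    have "l \<rho> \<noteq> 0" "F \<rho> \<noteq> 0" using h(2) unfolding g_def \<rho>_def by auto
    hence sn: "s (\<rho> + c) \<noteq> 0" unfolding F_def c_def by (simp add: D_iter)
    have "\<rho> + c = \<nu>0"
    proof (rule ccontr)
      assume "\<rho> + c \<noteq> \<nu>0"
      hence "\<rho> + c < \<nu>0" using le by simp
      hence "l (\<rho> + c) = 0" using lE sn by blast
      hence "l \<rho> = 0" using ladd[of \<rho> c] cq by simp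
      thus False using \<open>l \<rho> \<noteq> 0\<close> by simp
    qed
    thus "\<nu> \<in> {w + c}" unfolding \<rho>_def by simp
  qed
  also have "\<dots> = Rep_omega q (w + c) * g (\<nu>0 - c)" by simp
  also have "g (\<nu>0 - c) = complex_of_real (l \<nu>0) * (poly (bp D j) (zf D \<nu>0) * s \<nu>0)"
  proof -
    have "l \<nu>0 = l (\<nu>0 - c)" using ladd[of "\<nu>0 - c" c] cq by simp
    thus ?thesis unfolding g_def F_def c_def by (simp add: D_iter)
  qed
  finally show ?thesis unfolding F_def c_def .
qed

lemma key:
  assumes adm: "admissible_op D" and s: "s \<in> Omega" and dim: "dim_mod_Q_gt (gsupp s) n"
  shows "\<forall>Q. (\<exists>k<Suc n. Q k \<noteq> 0) \<longrightarrow> (\<exists>l. addl l \<and> (\<forall>q\<in>\<rat>. l q = 0) \<and>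
           (\<Sum>j<Suc n. Q j * dlt l (Abs_omega ((gs_op D ^^ j) s))) \<noteq> 0)"
proof (intro allI impI)
  fix Q :: "nat \<Rightarrow> omega"
  assume ex: "\<exists>k<Suc n. Q k \<noteq> 0"
  show "\<exists>l. addl l \<and> (\<forall>q\<in>\<rat>. l q = 0) \<and> (\<Sum>j<Suc n. Q j * dlt l (Abs_omega ((gs_op D ^^ j) s))) \<noteq> 0"
  proof (rule ccontr)
    assume H: "\<not> ?thesis"
    obtain N where N: "N \<subseteq> {\<nu> \<in> gsupp s. \<nu> \<notin> Q.span (\<rat> \<union> {\<nu>'\<in>gsupp s. \<nu>' < \<nu>})}" "finite N" "card N = Suc n"
      using new_exps[OF s dim] by blast
    define J where "J = {j. j < Suc n \<and> Q j \<noteq> 0}"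
    have fJ: "finite J" unfolding J_def by simp
    have neJ: "J \<noteq> {}" using ex unfolding J_def by blast
    define vm where "vm j = (SOME m. Rep_omega (Q j) m \<noteq> 0 \<and> (\<forall>\<mu>. Rep_omega (Q j) \<mu> \<noteq> 0 \<longrightarrow> m \<le> \<mu>))" for j
    have vm: "Rep_omega (Q j) (vm j) \<noteq> 0 \<and> (\<forall>\<mu>. Rep_omega (Q j) \<mu> \<noteq> 0 \<longrightarrow> vm j \<le> \<mu>)" if "Q j \<noteq> 0" for j
    proof -
      have "Rep_omega (Q j) \<noteq> gs_zero" using that Rep_eq_zero_iff by blast
      then obtain \<mu>1 where "Rep_omega (Q j) \<mu>1 \<noteq> 0" unfolding gs_zero_def by auto
      from omega_min[OF Rep_omega this] show ?thesis unfolding vm_def by (rule someI_ex)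
    qed
    define w where "w = Min ((\<lambda>j. vm j - sig D * real j) ` J)"
    have "w \<in> (\<lambda>j. vm j - sig D * real j) ` J" unfolding w_def
      by (rule Min_in) (use fJ neJ in auto)
    then obtain k0 where k0: "k0 \<in> J" "w = vm k0 - sig D * real k0" by blast
    have low: "\<forall>\<mu>. Rep_omega (Q j) \<mu> \<noteq> 0 \<longrightarrow> w + sig D * real j \<le> \<mu>" if "j < Suc n" for j
    proof (intro allI impI)
      fix \<mu> assume h: "Rep_omega (Q j) \<mu> \<noteq> 0"
      hence "Q j \<noteq> 0" by (auto simp: Rep_zero gs_zero_def)
      hence "j \<in> J" using that unfolding J_def by blast
      hence "w \<le> vm j - sig D * real j" unfolding w_def using fJ by simp
      moreover have "vm j \<le> \<mu>" using vm[OF \<open>Q j \<noteq> 0\<close>] h by blast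
      ultimately show "w + sig D * real j \<le> \<mu>" by simp
    qed
    define a where "a j = Rep_omega (Q j) (w + sig D * real j)" for j
    have roots: "\<forall>\<nu>\<in>N. (\<Sum>j<Suc n. a j * poly (bp D j) (zf D \<nu>)) = 0"
    proof
      fix \<nu>0 assume "\<nu>0 \<in> N"
      hence nu: "s \<nu>0 \<noteq> 0" "\<nu>0 \<notin> Q.span (\<rat> \<union> {\<nu>'\<in>gsupp s. \<nu>' < \<nu>0})" using N(1) by (auto simp: gsupp_def)
      obtain l :: "real \<Rightarrow> real" where l: "\<forall>a b. l (a+b) = l a + l b" "\<forall>u\<in>\<rat> \<union> {\<nu>'\<in>gsupp s. \<nu>' < \<nu>0}. l u = 0" "l \<nu>0 = 1"
        using exists_ell[OF nu(2)] by blast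
      have la: "addl l" using l(1) unfolding addl_def .
      have lq: "\<forall>q\<in>\<rat>. l q = 0" using l(2) by blast
      have lE: "\<forall>\<nu>'. s \<nu>' \<noteq> 0 \<and> \<nu>' < \<nu>0 \<longrightarrow> l \<nu>' = 0" using l(2) by (auto simp: gsupp_def)
      have z: "(\<Sum>j<Suc n. Q j * dlt l (Abs_omega ((gs_op D ^^ j) s))) = 0" using H la lq by blast
      have "0 = Rep_omega (\<Sum>j<Suc n. Q j * dlt l (Abs_omega ((gs_op D ^^ j) s))) (w + \<nu>0)"
        unfolding z by (simp add: Rep_zero gs_zero_def)
      also have "\<dots> = (\<Sum>j<Suc n. Rep_omega (Q j * dlt l (Abs_omega ((gs_op D ^^ j) s))) (w + \<nu>0))"
        unfolding Rep_sum[OF finite_lessThan] ..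
      also have "\<dots> = (\<Sum>j<Suc n. a j * (complex_of_real (l \<nu>0) * (poly (bp D j) (zf D \<nu>0) * s \<nu>0)))"
        unfolding a_def by (rule sum.cong[OF refl], rule term_formula[OF s la lq lE low]) simp
      also have "\<dots> = (\<Sum>j<Suc n. a j * poly (bp D j) (zf D \<nu>0)) * s \<nu>0"
        unfolding sum_distrib_right by (rule sum.cong[OF refl]) (simp add: l(3) mult_ac)
      finally show "(\<Sum>j<Suc n. a j * poly (bp D j) (zf D \<nu>0)) = 0" using nu(1) by simp
    qed
    have "\<forall>j<Suc n. a j = 0"
      by (rule poly_lemma[OF bp_deg N(2) N(3) inj_on_subset[OF zf_inj[OF adm] subset_UNIV] roots])
    moreover have "k0 < Suc n" "Q k0 \<noteq> 0" using k0(1) unfolding J_def by auto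
    ultimately have "a k0 = 0" by blast
    hence "Rep_omega (Q k0) (vm k0) = 0" unfolding a_def k0(2) by simp
    thus False using vm[OF \<open>Q k0 \<noteq> 0\<close>] by blast
  qed
qed

theorem corollary1:
  fixes D :: gop and s :: gser and n :: nat and P :: "(nat \<Rightarrow> nat) \<Rightarrow> gser"
  assumes "admissible_op D"
    and "s \<in> Omega"
    and "dim_mod_Q_gt (gsupp s) n"
    and "diff_poly n P"
    and "\<exists>\<alpha>. P \<alpha> \<noteq> gs_zero"
  shows "eval_diff_poly D n P s \<noteq> gs_zero"
proof -
  have PO: "P \<alpha> \<in> Omega" for \<alpha> using assms(4) unfolding diff_poly_def Puiseux_def by blast
  have fin: "finite {\<alpha>. P \<alpha> \<noteq> gs_zero}" using assms(4) unfolding diff_poly_def by blast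
  define P' where "P' \<alpha> = Abs_omega (P \<alpha>)" for \<alpha>
  define Y where "Y i = Abs_omega ((gs_op D ^^ i) s)" for i
  have RP: "Rep_omega (P' \<alpha>) = P \<alpha>" for \<alpha> unfolding P'_def using PO by (simp add: Abs_omega_inverse)
  have supp: "{\<alpha>. P' \<alpha> \<noteq> 0} = {\<alpha>. P \<alpha> \<noteq> gs_zero}"
    using RP by (auto simp: Rep_eq_zero_iff)
  have good: "good (Suc n) P'"
    unfolding good_def
  proof (intro conjI allI impI)
    show "finite {\<alpha>. P' \<alpha> \<noteq> 0}" using fin supp by simp
  next
    fix \<alpha> i assume "P' \<alpha> \<noteq> 0" "Suc n \<le> i"
    thus "\<alpha> i = 0" using assms(4) supp unfolding diff_poly_def by auto
  next
    fix \<alpha> \<mu> assume "Rep_omega (P' \<alpha>) \<mu> \<noteq> 0"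
    hence "\<mu> \<in> gsupp (P \<alpha>)" using RP by (simp add: gsupp_def)
    moreover have "P \<alpha> \<in> Puiseux" using assms(4) unfolding diff_poly_def by blast
    ultimately obtain d :: nat and k :: int where "\<mu> = real_of_int k / real d"
      unfolding Puiseux_def by blast
    thus "\<mu> \<in> \<rat>" by simp
  qed
  define d where "d = (\<Sum>\<alpha>\<in>{\<alpha>. P' \<alpha> \<noteq> 0}. \<Sum>i<Suc n. \<alpha> i)"
  have bound: "\<forall>\<alpha>. P' \<alpha> \<noteq> 0 \<longrightarrow> (\<Sum>i<Suc n. \<alpha> i) \<le> d"
    unfolding d_def using fin supp by (auto intro: member_le_sum)
  obtain \<alpha>0 where "P \<alpha>0 \<noteq> gs_zero" using assms(5) by blast
  hence nz: "P' \<alpha>0 \<noteq> 0" using supp by blast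
  have "ev (Suc n) P' Y \<noteq> 0"
    using core[OF key[OF assms(1-3)], of P' d \<alpha>0] good bound nz unfolding Y_def by blast
  moreover have "eval_diff_poly D n P s = Rep_omega (ev (Suc n) P' Y)"
    unfolding P'_def Y_def by (rule eval_conv[OF assms(2) PO fin])
  ultimately show ?thesis by (simp add: Rep_eq_zero_iff)
qed

end
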